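(* Let $A=(a(x),dF(x))$ and $B=(b(x),dF(x))$ be games. Then $h(p)=1/\int\frac{1}{pa(x)+(1-p)b(x)}\,dF(x)$ is continuous on $[0,1]$.
   Context: A game is a pair $(a(x),dF(x))$ with $dF$ a probability measure on $\mathbb{R}$ and $a\ge0$ measurable with finite positive integral. Convention: $1/(+\infty)=0$. *)

theory Defs
  imports "HOL-Probability.Probability"
begin

definition game :: "(real \<Rightarrow> real) \<Rightarrow> real measure \<Rightarrow> bool" where
  "game a F \<longleftrightarrow> prob_space F \<and> sets F = sets borel \<and>
     a \<in> borel_measurable borel \<and> (\<forall>x. 0 \<le> a x) \<and>
     integrable F a \<and> 0 < integral\<^sup>L F a"

text \<open>h(p) = 1 / integral of 1/(p a + (1-p) b) dF, computed in [0,\<infinity>] where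
  inverse 0 = \<infinity> and 1/\<infinity> = 0.\<close>
definition hfun :: "(real \<Rightarrow> real) \<Rightarrow> (real \<Rightarrow> real) \<Rightarrow> real measure \<Rightarrow> real \<Rightarrow> ennreal" where
  "hfun a b F p = 1 / (\<integral>\<^sup>+ x. inverse (ennreal (p * a x + (1 - p) * b x)) \<partial>F)"

end

theory Submission
  imports Defs
begin

lemma inv_ennreal_antimono:
  fixes r s :: real
  assumes "0 \<le> s" "s \<le> r"
  shows "inverse (ennreal r) \<le> inverse (ennreal s)"
proof (cases "s = 0")
  case True then show ?thesis by simp
next
  case False
  then have "0 < s" "0 < r" using assms by auto
  then show ?thesis using assms
    by (simp add: inverse_ennreal ennreal_leI le_imp_inverse_le)
qed

lemma inv_cont: "continuous_on UNIV (inverse :: ennreal \<Rightarrow> ennreal)"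
  using continuous_on_inverse_ennreal[OF continuous_on_id[of UNIV]] by (simp add: id_def)

lemma seq_cont:
  fixes a b :: "real \<Rightarrow> real" and F :: "real measure"
  assumes ma: "a \<in> borel_measurable F" and mb: "b \<in> borel_measurable F"
    and a0: "\<And>x. 0 \<le> a x" and b0: "\<And>x. 0 \<le> b x"
    and p0: "p0 \<in> {0..1}" and X: "\<And>i. X i \<in> {0..1}" and lim: "X \<longlonglongrightarrow> p0"
  defines "G \<equiv> (\<lambda>p. \<integral>\<^sup>+ x. inverse (ennreal (p * a x + (1 - p) * b x)) \<partial>F)"
  shows "(\<lambda>n. G (X n)) \<longlonglongrightarrow> G p0"
proof -
  have meas: "(\<lambda>x. inverse (ennreal (p * a x + (1 - p) * b x))) \<in> borel_measurable F" for p
    using ma mb by measurable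
  have pw: "(\<lambda>n. inverse (ennreal (X n * a x + (1 - X n) * b x)))
      \<longlonglongrightarrow> inverse (ennreal (p0 * a x + (1 - p0) * b x))" for x
  proof -
    have "(\<lambda>n. X n * a x + (1 - X n) * b x) \<longlonglongrightarrow> p0 * a x + (1 - p0) * b x"
      by (intro tendsto_intros lim)
    then have "(\<lambda>n. ennreal (X n * a x + (1 - X n) * b x)) \<longlonglongrightarrow> ennreal (p0 * a x + (1 - p0) * b x)"
      by (rule tendsto_ennrealI)
    from continuous_on_tendsto_compose[OF inv_cont this UNIV_I] show ?thesis
      by (simp add: comp_def)
  qed
  have low: "G p0 \<le> liminf (\<lambda>n. G (X n))"
  proof -
    have "G p0 = (\<integral>\<^sup>+ x. liminf (\<lambda>n. inverse (ennreal (X n * a x + (1 - X n) * b x))) \<partial>F)"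
      unfolding G_def
      by (intro nn_integral_cong lim_imp_Liminf[symmetric] pw) simp
    also have "\<dots> \<le> liminf (\<lambda>n. G (X n))"
      unfolding G_def by (rule nn_integral_liminf) (rule meas)
    finally show ?thesis .
  qed
  define m where "m = (\<lambda>p. min (if p0 = 0 then 1 else p / p0) (if p0 = 1 then 1 else (1 - p) / (1 - p0)))"
  have mlim: "(\<lambda>n. m (X n)) \<longlonglongrightarrow> 1"
  proof -
    have l1: "(\<lambda>n. if p0 = 0 then 1 else X n / p0) \<longlonglongrightarrow> 1"
    proof (cases "p0 = 0")
      case False
      have "(\<lambda>n. X n / p0) \<longlonglongrightarrow> p0 / p0"
        using False by (intro tendsto_intros lim) auto
      with False show ?thesis by simp
    qed simp
    have l2: "(\<lambda>n. if p0 = 1 then 1 else (1 - X n) / (1 - p0)) \<longlonglongrightarrow> 1"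
    proof (cases "p0 = 1")
      case False
      have "(\<lambda>n. (1 - X n) / (1 - p0)) \<longlonglongrightarrow> (1 - p0) / (1 - p0)"
        using False by (intro tendsto_intros lim) auto
      with False show ?thesis by simp
    qed simp
    have "(\<lambda>n. m (X n)) \<longlonglongrightarrow> min 1 1"
      unfolding m_def by (rule tendsto_min[OF l1 l2])
    then show ?thesis by simp
  qed
  have evpos: "eventually (\<lambda>n. 0 < m (X n)) sequentially"
    using order_tendstoD(1)[OF mlim, of 0] by simp
  have bound: "G p \<le> inverse (ennreal (m p)) * G p0" if "p \<in> {0..1}" "0 < m p" for p
  proof -
    have "inverse (ennreal (p * a x + (1 - p) * b x))
        \<le> inverse (ennreal (m p)) * inverse (ennreal (p0 * a x + (1 - p0) * b x))" for x
    proof -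
      have c1: "m p * p0 \<le> p"
        using that p0 unfolding m_def by (auto simp: field_simps min_def split: if_splits)
      have c2: "m p * (1 - p0) \<le> 1 - p"
        using that p0 unfolding m_def by (auto simp: field_simps min_def split: if_splits)
      have "m p * (p0 * a x + (1 - p0) * b x) = (m p * p0) * a x + (m p * (1 - p0)) * b x"
        by (simp add: algebra_simps)
      also have "\<dots> \<le> p * a x + (1 - p) * b x"
        using c1 c2 a0[of x] b0[of x] by (intro add_mono mult_right_mono) auto
      finally have le: "m p * (p0 * a x + (1 - p0) * b x) \<le> p * a x + (1 - p) * b x" .
      have nn: "0 \<le> p0 * a x + (1 - p0) * b x"
        using p0 a0[of x] b0[of x] by simp
      have "inverse (ennreal (p * a x + (1 - p) * b x))
          \<le> inverse (ennreal (m p * (p0 * a x + (1 - p0) * b x)))"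
        by (rule inv_ennreal_antimono) (use that nn le in auto)
      also have "\<dots> = inverse (ennreal (m p)) * inverse (ennreal (p0 * a x + (1 - p0) * b x))"
        using that nn by (simp add: ennreal_mult ennreal_inverse_mult)
      finally show ?thesis .
    qed
    then have "G p \<le> (\<integral>\<^sup>+ x. inverse (ennreal (m p)) * inverse (ennreal (p0 * a x + (1 - p0) * b x)) \<partial>F)"
      unfolding G_def by (intro nn_integral_mono) auto
    also have "\<dots> = inverse (ennreal (m p)) * G p0"
      unfolding G_def by (rule nn_integral_cmult) (rule meas)
    finally show ?thesis .
  qed
  have ulim: "(\<lambda>n. inverse (ennreal (m (X n))) * G p0) \<longlonglongrightarrow> G p0"
  proof -
    have "(\<lambda>n. ennreal (m (X n))) \<longlonglongrightarrow> ennreal 1"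
      by (rule tendsto_ennrealI) (rule mlim)
    from continuous_on_tendsto_compose[OF inv_cont this UNIV_I]
    have "(\<lambda>n. inverse (ennreal (m (X n)))) \<longlonglongrightarrow> inverse (ennreal 1)"
      by (simp add: comp_def)
    then have "(\<lambda>n. inverse (ennreal (m (X n))) * G p0) \<longlonglongrightarrow> inverse (ennreal 1) * G p0"
      by (intro tendsto_mult_ennreal tendsto_const) auto
    then show ?thesis by simp
  qed
  have up: "limsup (\<lambda>n. G (X n)) \<le> G p0"
  proof -
    have "limsup (\<lambda>n. G (X n)) \<le> limsup (\<lambda>n. inverse (ennreal (m (X n))) * G p0)"
      by (rule Limsup_mono) (use evpos in \<open>eventually_elim\<close>, use bound X in auto)
    also have "\<dots> = G p0" using ulim by (simp add: lim_imp_Limsup)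
    finally show ?thesis .
  qed
  have "liminf (\<lambda>n. G (X n)) \<le> limsup (\<lambda>n. G (X n))"
    by (rule Liminf_le_Limsup) simp
  then show ?thesis
    using low up by (intro Liminf_eq_Limsup) (auto intro: antisym order_trans)
qed

theorem lemmaD12:
  fixes a b :: "real \<Rightarrow> real" and F :: "real measure"
  assumes "game a F" and "game b F"
  shows "continuous_on {0..1} (hfun a b F)"
proof -
  have sF: "sets F = sets borel" using assms(1) unfolding game_def by blast
  have bF: "borel_measurable F = borel_measurable borel"
    by (rule measurable_cong_sets[OF sF refl])
  have ma: "a \<in> borel_measurable F"
    unfolding bF using assms(1) unfolding game_def by blast
  have mb: "b \<in> borel_measurable F"
    unfolding bF using assms(2) unfolding game_def by blast
  have a0: "\<And>x. 0 \<le> a x" using assms(1) unfolding game_def by blast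
  have b0: "\<And>x. 0 \<le> b x" using assms(2) unfolding game_def by blast
  define G where "G = (\<lambda>p. \<integral>\<^sup>+ x. inverse (ennreal (p * a x + (1 - p) * b x)) \<partial>F)"
  have "continuous_on {0..1} G"
    unfolding continuous_on_def
  proof
    fix p0 :: real assume p0: "p0 \<in> {0..1}"
    show "(G \<longlongrightarrow> G p0) (at p0 within {0..1})"
      unfolding tendsto_at_iff_sequentially
    proof (intro allI impI)
      fix X :: "nat \<Rightarrow> real" assume X: "\<forall>i. X i \<in> {0..1} - {p0}" and lim: "X \<longlonglongrightarrow> p0"
      have Xi: "\<And>i. X i \<in> {0..1}" using X by blast
      from seq_cont[OF ma mb a0 b0 p0 Xi lim] show "(G \<circ> X) \<longlonglongrightarrow> G p0"
        unfolding G_def comp_def .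
    qed
  qed
  then have "continuous_on {0..1} (\<lambda>p. inverse (G p))"
    by (rule continuous_on_inverse_ennreal)
  moreover have "hfun a b F = (\<lambda>p. inverse (G p))"
    unfolding hfun_def G_def by (simp add: divide_ennreal_def)
  ultimately show ?thesis by simp
qed

end
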